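(* Let $P,Q$ be fixed probability distributions on $\mathbb{R}$ (not depending on $n$) such that $Q$ is absolutely continuous with respect to $P$, and let $k=k_n\in\{2,\dots,n\}$ be a sequence. If $R(T^* )\to 0$ as $n\to\infty$, then $k_n\to\infty$.
   Context: Weighted hidden clique model. For $n\ge 2$ and $k\in\{2,\dots,n\}$, let $E=\{(i,j):1\le i<j\le n\}$ and for $S\subseteq[n]$ let $E(S)=\{(i,j):i,j\in S,\ i<j\}$. The observation is $\mathbf{X}=(X_e)_{e\in E}$. Under $\mathcal{H}_0$ (law $\mathbb{P}_0$) the $X_e$ are i.i.d. $P$. Under $\mathcal{H}_1$ (law $\mathbb{P}_1$) a uniformly random $k$-subset $S^*\subseteq[n]$ is chosen and, conditionally on $S^*$, the $X_e$ are independent with $X_e\sim Q$ for $e\in E(S^* )$ and $X_e\sim P$ otherwise. The risk of a test $T:\mathbb{R}^{\binom n2}\to\{0,1\}$ is $R(T)=\mathbb{P}_0(T=1)+\mathbb{P}_1(T=0)$, and $R(T^* )=\inf_T R(T)$ is the optimal risk (attained by the likelihood ratio test $T^*$). *)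

theory Defs
  imports "HOL-Probability.Probability"
begin

definition hc_edges :: "nat \<Rightarrow> (nat \<times> nat) set" where
  "hc_edges n = {(i, j). 1 \<le> i \<and> i < j \<and> j \<le> n}"

definition hc_edges_of :: "nat set \<Rightarrow> (nat \<times> nat) set" where
  "hc_edges_of S = {(i, j). i \<in> S \<and> j \<in> S \<and> i < j}"

text \<open>The k-subsets of [n] (support of the uniform law of S*).\<close>
definition hc_subsets :: "nat \<Rightarrow> nat \<Rightarrow> nat set set" where
  "hc_subsets n k = {S. S \<subseteq> {1..n} \<and> card S = k}"

definition hc_null :: "real measure \<Rightarrow> nat \<Rightarrow> (nat \<times> nat \<Rightarrow> real) measure" where
  "hc_null P n = PiM (hc_edges n) (\<lambda>_. P)"

text \<open>Conditional law given S* = S: Q on E(S), P elsewhere.\<close>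
definition hc_planted ::
  "real measure \<Rightarrow> real measure \<Rightarrow> nat \<Rightarrow> nat set \<Rightarrow> (nat \<times> nat \<Rightarrow> real) measure" where
  "hc_planted P Q n S = PiM (hc_edges n) (\<lambda>e. if e \<in> hc_edges_of S then Q else P)"

text \<open>P_1(B): average over the uniformly random k-subset S* of the conditional laws.\<close>
definition hc_alt_prob ::
  "real measure \<Rightarrow> real measure \<Rightarrow> nat \<Rightarrow> nat \<Rightarrow> (nat \<times> nat \<Rightarrow> real) set \<Rightarrow> real" where
  "hc_alt_prob P Q n k B =
     (\<Sum>S\<in>hc_subsets n k. measure (hc_planted P Q n S) B) / real (card (hc_subsets n k))"

text \<open>Risk of a (measurable) test T (True = reject H0, i.e. T = 1):
  R(T) = P_0(T = 1) + P_1(T = 0).\<close>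
definition hc_risk ::
  "real measure \<Rightarrow> real measure \<Rightarrow> nat \<Rightarrow> nat \<Rightarrow> ((nat \<times> nat \<Rightarrow> real) \<Rightarrow> bool) \<Rightarrow> real" where
  "hc_risk P Q n k T =
     measure (hc_null P n) {x \<in> space (hc_null P n). T x}
     + hc_alt_prob P Q n k {x \<in> space (hc_null P n). \<not> T x}"

definition hc_opt_risk :: "real measure \<Rightarrow> real measure \<Rightarrow> nat \<Rightarrow> nat \<Rightarrow> real" where
  "hc_opt_risk P Q n k =
     (INF T \<in> measurable (hc_null P n) (count_space UNIV). hc_risk P Q n k T)"

end

theory Submission imports Defs begin

lemma one_dim:
  fixes P Q :: "'a measure" and F G :: "'a \<Rightarrow> ennreal"
  assumes "prob_space P" "sets Q = sets P" "absolutely_continuous P Q"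
  and F: "F \<in> borel_measurable P" and G: "G \<in> borel_measurable P"
  and FG: "\<forall>y\<in>space P. d \<le> F y + G y"
  shows "(\<integral>\<^sup>+x. min 1 (RN_deriv P Q x) \<partial>P) * d \<le> integral\<^sup>N P F + integral\<^sup>N Q G"
proof -
  interpret prob_space P by fact
  let ?g = "RN_deriv P Q"
  have "integral\<^sup>N Q G = (\<integral>\<^sup>+x. ?g x * G x \<partial>P)"
    using RN_deriv_nn_integral[OF assms(3,2) G] .
  hence "integral\<^sup>N P F + integral\<^sup>N Q G = (\<integral>\<^sup>+x. F x + ?g x * G x \<partial>P)"
    using F G by (simp add: nn_integral_add)
  also have "\<dots> \<ge> (\<integral>\<^sup>+x. min 1 (?g x) * d \<partial>P)"
  proof (rule nn_integral_mono)
    fix x assume x: "x \<in> space P"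
    have "min 1 (?g x) * d \<le> min 1 (?g x) * (F x + G x)"
      using FG x by (simp add: mult_left_mono)
    also have "\<dots> = min 1 (?g x) * F x + min 1 (?g x) * G x" by (simp add: distrib_left)
    also have "\<dots> \<le> F x + ?g x * G x"
    proof (rule add_mono)
      show "min 1 (?g x) * F x \<le> F x"
        using mult_right_mono[of "min 1 (?g x)" 1 "F x"] by simp
      show "min 1 (?g x) * G x \<le> ?g x * G x"
        by (simp add: mult_right_mono)
    qed
    finally show "min 1 (?g x) * d \<le> F x + ?g x * G x" .
  qed
  also have "(\<integral>\<^sup>+x. min 1 (?g x) * d \<partial>P) = (\<integral>\<^sup>+x. min 1 (?g x) \<partial>P) * d"
    by (simp add: nn_integral_multc)
  finally show ?thesis by simp
qed

lemma one_dim_pos: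
  fixes P Q :: "'a measure"
  assumes "prob_space P" "prob_space Q" "sets Q = sets P" "absolutely_continuous P Q"
  shows "0 < (\<integral>\<^sup>+x. min 1 (RN_deriv P Q x) \<partial>P)" "(\<integral>\<^sup>+x. min 1 (RN_deriv P Q x) \<partial>P) \<le> 1"
proof -
  interpret prob_space P by fact
  let ?g = "RN_deriv P Q"
  show "(\<integral>\<^sup>+x. min 1 (RN_deriv P Q x) \<partial>P) \<le> 1"
  proof -
    have "(\<integral>\<^sup>+x. min 1 (RN_deriv P Q x) \<partial>P) \<le> (\<integral>\<^sup>+x. 1 \<partial>P)"
      by (intro nn_integral_mono) simp
    thus ?thesis by (simp add: emeasure_space_1)
  qed
  show "0 < (\<integral>\<^sup>+x. min 1 (RN_deriv P Q x) \<partial>P)"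
  proof (rule ccontr)
    assume "\<not> ?thesis"
    hence "(\<integral>\<^sup>+x. min 1 (RN_deriv P Q x) \<partial>P) = 0" by (simp add: not_less)
    hence "AE x in P. min 1 (?g x) = 0"
      by (subst (asm) nn_integral_0_iff_AE) auto
    hence "AE x in P. ?g x * 1 = 0"
      by eventually_elim (auto simp: min_def split: if_splits)
    hence "(\<integral>\<^sup>+x. ?g x * 1 \<partial>P) = 0"
      by (simp add: nn_integral_0_iff_AE)
    moreover have "integral\<^sup>N Q (\<lambda>_. 1) = (\<integral>\<^sup>+x. ?g x * 1 \<partial>P)"
      using RN_deriv_nn_integral[OF assms(4,3), of "\<lambda>_. 1"] by simp
    moreover have "integral\<^sup>N Q (\<lambda>_. 1) = 1"
      using prob_space.emeasure_space_1[OF assms(2)] by simp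
    ultimately show False by simp
  qed
qed

lemma prod_bound:
  fixes M1 M2 :: "'i \<Rightarrow> 'a measure" and c :: "'i \<Rightarrow> ennreal"
  assumes I: "finite I"
  and ps1: "\<And>e. prob_space (M1 e)" and ps2: "\<And>e. prob_space (M2 e)"
  and ss: "\<And>e. sets (M2 e) = sets (M1 e)"
  and H: "\<And>e F G d. e \<in> I \<Longrightarrow> F \<in> borel_measurable (M1 e) \<Longrightarrow> G \<in> borel_measurable (M1 e)
      \<Longrightarrow> (\<forall>y\<in>space (M1 e). d \<le> F y + G y) \<Longrightarrow> c e * d \<le> integral\<^sup>N (M1 e) F + integral\<^sup>N (M2 e) G"
  shows "f \<in> borel_measurable (PiM I M1) \<Longrightarrow> g \<in> borel_measurable (PiM I M1)
    \<Longrightarrow> (\<forall>x\<in>space (PiM I M1). d \<le> f x + g x)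
    \<Longrightarrow> (\<Prod>e\<in>I. c e) * d \<le> integral\<^sup>N (PiM I M1) f + integral\<^sup>N (PiM I M2) g"
  using I H
proof (induction I arbitrary: f g d rule: finite_induct)
  case empty
  have sp: "space (PiM {} M1) = {\<lambda>_. undefined}" by (simp add: PiM_empty)
  have "d \<le> f (\<lambda>_. undefined) + g (\<lambda>_. undefined)" using empty sp by auto
  thus ?case by (simp add: PiM_empty nn_integral_count_space_finite)
next
  case (insert i I)
  interpret p1: product_sigma_finite M1
    unfolding product_sigma_finite_def using ps1 by (simp add: prob_space_imp_sigma_finite)
  interpret p2: product_sigma_finite M2
    unfolding product_sigma_finite_def using ps2 by (simp add: prob_space_imp_sigma_finite)
  have sPi: "sets (PiM J M2) = sets (PiM J M1)" for J
    by (rule sets_PiM_cong) (auto simp: ss)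
  have spPi: "space (PiM J M2) = space (PiM J M1)" for J
    using sets_eq_imp_space_eq[OF sPi] .
  have f[measurable]: "f \<in> borel_measurable (PiM (insert i I) M1)" by fact
  have g1[measurable]: "g \<in> borel_measurable (PiM (insert i I) M1)" by fact
  have g[measurable]: "g \<in> borel_measurable (PiM (insert i I) M2)"
    using g1 by (simp add: measurable_cong_sets[OF sPi refl])
  define F where "F x = (\<integral>\<^sup>+ y. f (x(i := y)) \<partial>(M1 i))" for x
  define G where "G x = (\<integral>\<^sup>+ y. g (x(i := y)) \<partial>(M2 i))" for x
  have eqf: "integral\<^sup>N (PiM (insert i I) M1) f = integral\<^sup>N (PiM I M1) F"
    unfolding F_def by (rule p1.product_nn_integral_insert[OF insert(1,2) f])
  have eqg: "integral\<^sup>N (PiM (insert i I) M2) g = integral\<^sup>N (PiM I M2) G"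
    unfolding G_def by (rule p2.product_nn_integral_insert[OF insert(1,2) g])
  have Fm: "F \<in> borel_measurable (PiM I M1)"
    unfolding F_def by measurable
  have Gm2: "G \<in> borel_measurable (PiM I M2)"
    unfolding G_def by measurable
  have Gm: "G \<in> borel_measurable (PiM I M1)"
    using Gm2 by (simp add: measurable_cong_sets[OF sPi refl])
  have FG: "\<forall>x\<in>space (PiM I M1). c i * d \<le> F x + G x"
  proof
    fix x assume x: "x \<in> space (PiM I M1)"
    have upd: "(\<lambda>v. x(i := v)) \<in> measurable (M1 i) (PiM (insert i I) M1)"
      using measurable_component_update[OF x insert(2)] .
    have upd2: "(\<lambda>v. x(i := v)) \<in> measurable (M2 i) (PiM (insert i I) M2)"
      using measurable_component_update[of x I M2 i] x insert(2) spPi by simp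
    show "c i * d \<le> F x + G x"
      unfolding F_def G_def
    proof (rule insert.prems(4))
      show "i \<in> insert i I" by simp
      show "(\<lambda>y. f (x(i := y))) \<in> borel_measurable (M1 i)"
        using measurable_comp[OF upd f] by (simp add: comp_def)
      have "(\<lambda>y. g (x(i := y))) \<in> borel_measurable (M2 i)"
        using measurable_comp[OF upd2 g] by (simp add: comp_def)
      thus "(\<lambda>y. g (x(i := y))) \<in> borel_measurable (M1 i)"
        by (simp add: measurable_cong_sets[OF ss refl])
      show "\<forall>y\<in>space (M1 i). d \<le> f (x(i := y)) + g (x(i := y))"
        using insert.prems(3) measurable_space[OF upd] by auto
    qed
  qed
  have "(\<Prod>e\<in>I. c e) * (c i * d) \<le> integral\<^sup>N (PiM I M1) F + integral\<^sup>N (PiM I M2) G"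
    using insert.IH[OF Fm Gm FG] insert.prems(4) by blast
  thus ?case using insert(1,2) eqf eqg by (simp add: mult.assoc mult.commute mult.left_commute)
qed


lemma per_S:
  fixes P Q :: "real measure"
  assumes psP: "prob_space P" and psQ: "prob_space Q" and sQ: "sets Q = sets P"
    and ac: "absolutely_continuous P Q"
    and S: "S \<in> hc_subsets n k"
    and T: "T \<in> measurable (hc_null P n) (count_space UNIV)"
  shows "(enn2real (\<integral>\<^sup>+x. min 1 (RN_deriv P Q x) \<partial>P)) ^ (k^2) \<le>
     measure (hc_null P n) {x \<in> space (hc_null P n). T x}
     + measure (hc_planted P Q n S) {x \<in> space (hc_null P n). \<not> T x}"
proof -
  define c where "c = (\<integral>\<^sup>+x. min 1 (RN_deriv P Q x) \<partial>P)"
  have c1: "c \<le> 1" and c0: "0 < c" using one_dim_pos[OF psP psQ sQ ac] by (auto simp: c_def)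
  define cr where "cr = enn2real c"
  have ccr: "c = ennreal cr" unfolding cr_def using c1
    by (metis enn2real_le_iff ennreal_enn2real ennreal_one_less_top le_less_trans less_top order_less_imp_le)
  define J where "J = hc_edges_of S"
  define I where "I = hc_edges n"
  define M2 where "M2 = (\<lambda>e. if e \<in> J then Q else P)"
  have finI: "finite I" unfolding I_def hc_edges_def
    by (rule finite_subset[of _ "{1..n} \<times> {1..n}"]) auto
  have ps2: "\<And>e. prob_space (M2 e)" unfolding M2_def using psP psQ by auto
  have ss: "\<And>e. sets (M2 e) = sets P" unfolding M2_def using sQ by auto
  have null: "hc_null P n = PiM I (\<lambda>_. P)" unfolding hc_null_def I_def ..
  have planted: "hc_planted P Q n S = PiM I M2" unfolding hc_planted_def I_def M2_def J_def ..
  have sPi: "sets (PiM I M2) = sets (PiM I (\<lambda>_. P))"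
    by (rule sets_PiM_cong) (auto simp: ss)
  have spPi: "space (PiM I M2) = space (PiM I (\<lambda>_. P))"
    using sets_eq_imp_space_eq[OF sPi] .
  define A where "A = {x \<in> space (hc_null P n). T x}"
  define B where "B = {x \<in> space (hc_null P n). \<not> T x}"
  have A: "A \<in> sets (hc_null P n)"
  proof -
    have "T -` {True} \<inter> space (hc_null P n) \<in> sets (hc_null P n)"
      by (rule measurable_sets[OF T]) simp
    moreover have "T -` {True} \<inter> space (hc_null P n) = A" unfolding A_def by auto
    ultimately show ?thesis by simp
  qed
  have B: "B \<in> sets (hc_null P n)"
  proof -
    have "T -` {False} \<inter> space (hc_null P n) \<in> sets (hc_null P n)"
      by (rule measurable_sets[OF T]) simp
    moreover have "T -` {False} \<inter> space (hc_null P n) = B" unfolding B_def by auto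
    ultimately show ?thesis by simp
  qed
  define c' where "c' = (\<lambda>e. if e \<in> J then c else 1)"
  have main: "(\<Prod>e\<in>I. c' e) * 1 \<le> integral\<^sup>N (PiM I (\<lambda>_. P)) (indicator A)
      + integral\<^sup>N (PiM I M2) (indicator B)"
  proof (rule prod_bound[OF finI, of "\<lambda>_. P" M2 c'])
    show "\<And>e. prob_space P" by (rule psP)
    show "\<And>e. prob_space (M2 e)" by (rule ps2)
    show "\<And>e. sets (M2 e) = sets P" by (rule ss)
    show "indicator A \<in> borel_measurable (PiM I (\<lambda>_. P))" using A null by simp
    show "indicator B \<in> borel_measurable (PiM I (\<lambda>_. P))" using B null by simp
    show "\<forall>x\<in>space (PiM I (\<lambda>_. P)). 1 \<le> indicator A x + (indicator B x :: ennreal)"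
      unfolding A_def B_def null by (auto simp: indicator_def)
  next
    fix e F G and d :: ennreal
    assume e: "e \<in> I" and F: "F \<in> borel_measurable P" and G: "G \<in> borel_measurable P"
      and FG: "\<forall>y\<in>space P. d \<le> F y + G y"
    show "c' e * d \<le> integral\<^sup>N P F + integral\<^sup>N (M2 e) G"
    proof (cases "e \<in> J")
      case True
      thus ?thesis unfolding c'_def M2_def c_def using one_dim[OF psP sQ ac F G FG] by simp
    next
      case False
      interpret prob_space P by (rule psP)
      have "integral\<^sup>N P F + integral\<^sup>N P G = (\<integral>\<^sup>+x. F x + G x \<partial>P)"
        using F G by (simp add: nn_integral_add)
      also have "\<dots> \<ge> (\<integral>\<^sup>+x. d \<partial>P)" by (rule nn_integral_mono) (use FG in auto)
      also have "(\<integral>\<^sup>+x. d \<partial>P) = d" by (simp add: emeasure_space_1)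
      finally show ?thesis using False unfolding c'_def M2_def by simp
    qed
  qed
  have JS: "J \<subseteq> S \<times> S" unfolding J_def hc_edges_of_def by auto
  have finS: "finite S" and cardS: "card S = k" using S unfolding hc_subsets_def
    by (auto intro: finite_subset)
  have cardJ: "card (I \<inter> J) \<le> k^2"
  proof -
    have "card (I \<inter> J) \<le> card (S \<times> S)"
      by (rule card_mono) (use JS finS in auto)
    thus ?thesis using cardS by (simp add: card_cartesian_product power2_eq_square)
  qed
  have "(\<Prod>e\<in>I. c' e) = c ^ card (I \<inter> J)"
    unfolding c'_def using finI by (simp add: prod.If_cases Int_def)
  also have "\<dots> \<ge> c ^ (k^2)"
    using c1 cardJ by (simp add: power_decreasing)
  finally have fin: "c ^ (k^2) \<le> emeasure (PiM I (\<lambda>_. P)) A + emeasure (PiM I M2) B"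
    using main A B null sPi by simp
  moreover have "prob_space (PiM I (\<lambda>_. P))" using psP finI by (simp add: prob_space_PiM)
  hence em1: "emeasure (PiM I (\<lambda>_. P)) A = ennreal (measure (PiM I (\<lambda>_. P)) A)"
    by (intro finite_measure.emeasure_eq_measure prob_space.finite_measure)
  moreover have "prob_space (PiM I M2)" using ps2 finI by (simp add: prob_space_PiM)
  hence em2: "emeasure (PiM I M2) B = ennreal (measure (PiM I M2) B)"
    by (intro finite_measure.emeasure_eq_measure prob_space.finite_measure)
  ultimately have "ennreal (cr ^ (k^2)) \<le> ennreal (measure (PiM I (\<lambda>_. P)) A + measure (PiM I M2) B)"
    proof -
    have cr0: "0 \<le> cr" by (simp add: cr_def)
    have e1: "ennreal (cr ^ (k^2)) = c ^ (k^2)" using ccr cr0 by (simp add: ennreal_power)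
    have e2: "ennreal (measure (PiM I (\<lambda>_. P)) A + measure (PiM I M2) B)
       = ennreal (measure (PiM I (\<lambda>_. P)) A) + ennreal (measure (PiM I M2) B)"
      by (rule ennreal_plus) auto
    show ?thesis unfolding e1 e2 using fin em1 em2 by simp
  qed
  hence "cr ^ (k^2) \<le> measure (PiM I (\<lambda>_. P)) A + measure (PiM I M2) B"
    by (metis ennreal_le_iff add_nonneg_nonneg measure_nonneg)
  thus ?thesis unfolding A_def B_def null planted cr_def c_def .
qed


lemma opt_bound:
  fixes P Q :: "real measure"
  assumes psP: "prob_space P" and psQ: "prob_space Q" and sQ: "sets Q = sets P"
    and ac: "absolutely_continuous P Q" and kn: "k \<le> n"
  shows "(enn2real (\<integral>\<^sup>+x. min 1 (RN_deriv P Q x) \<partial>P)) ^ (k^2) \<le> hc_opt_risk P Q n k"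
proof -
  define \<delta> where "\<delta> = (enn2real (\<integral>\<^sup>+x. min 1 (RN_deriv P Q x) \<partial>P)) ^ (k^2)"
  define SS where "SS = hc_subsets n k"
  have finSS: "finite SS" unfolding SS_def hc_subsets_def
    by (rule finite_subset[of _ "Pow {1..n}"]) auto
  have "{1..k} \<in> SS" unfolding SS_def hc_subsets_def using kn by auto
  hence SSne: "SS \<noteq> {}" by auto
  have N: "0 < real (card SS)" using finSS SSne by (simp add: card_gt_0_iff)
  have risk: "\<delta> \<le> hc_risk P Q n k T" if T: "T \<in> measurable (hc_null P n) (count_space UNIV)" for T
  proof -
    define a where "a = measure (hc_null P n) {x \<in> space (hc_null P n). T x}"
    define b where "b S = measure (hc_planted P Q n S) {x \<in> space (hc_null P n). \<not> T x}" for S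
    have each: "\<delta> \<le> a + b S" if "S \<in> SS" for S
      unfolding \<delta>_def a_def b_def using per_S[OF psP psQ sQ ac _ T] that SS_def by simp
    have "real (card SS) * \<delta> = (\<Sum>S\<in>SS. \<delta>)" by simp
    also have "\<dots> \<le> (\<Sum>S\<in>SS. a + b S)" by (rule sum_mono) (rule each)
    also have "\<dots> = real (card SS) * a + (\<Sum>S\<in>SS. b S)" by (simp add: sum.distrib)
    finally have "real (card SS) * \<delta> \<le> real (card SS) * a + (\<Sum>S\<in>SS. b S)" .
    hence "\<delta> \<le> a + (\<Sum>S\<in>SS. b S) / real (card SS)"
      using N by (simp add: field_simps)
    thus ?thesis unfolding hc_risk_def hc_alt_prob_def a_def b_def SS_def by simp
  qed
  have ne: "measurable (hc_null P n) (count_space (UNIV :: bool set)) \<noteq> {}"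
  proof
    assume e: "measurable (hc_null P n) (count_space (UNIV :: bool set)) = {}"
    have mem: "(\<lambda>_. True) \<in> measurable (hc_null P n) (count_space UNIV)" by simp
    show False using mem unfolding e by simp
  qed
  show ?thesis unfolding hc_opt_risk_def \<delta>_def[symmetric]
    by (rule cINF_greatest[OF ne risk])
qed

theorem mainTheorem2:
  fixes P Q :: "real measure" and k :: "nat \<Rightarrow> nat"
  assumes "prob_space P" and "prob_space Q"
    and "sets P = sets borel" and "sets Q = sets borel"
    and "absolutely_continuous P Q"
    and "\<And>n. n \<ge> 2 \<Longrightarrow> 2 \<le> k n \<and> k n \<le> n"
    and "(\<lambda>n. hc_opt_risk P Q n (k n)) \<longlonglongrightarrow> 0"
  shows "filterlim k at_top sequentially"
proof (rule ccontr)
  assume nf: "\<not> filterlim k at_top sequentially"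
  have sQ: "sets Q = sets P" using assms(3,4) by simp
  define c where "c = (\<integral>\<^sup>+x. min 1 (RN_deriv P Q x) \<partial>P)"
  have c1: "c \<le> 1" and c0: "0 < c" using one_dim_pos[OF assms(1,2) sQ assms(5)] by (auto simp: c_def)
  define cr where "cr = enn2real c"
  have ctop: "c < \<top>" using c1 ennreal_one_less_top le_less_trans by blast
  have cr0: "0 < cr" and cr1: "cr \<le> 1" unfolding cr_def using c0 c1 ctop
    by (auto simp: enn2real_positive_iff top_unique enn2real_leI)
  obtain K where "\<not> (\<forall>\<^sub>F n in sequentially. K \<le> k n)"
    using nf by (auto simp: filterlim_at_top)
  hence freq: "\<exists>\<^sub>F n in sequentially. k n < K"
    by (simp add: not_eventually not_le)
  have dpos: "0 < cr ^ (K^2)" using cr0 by simp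
  have ev1: "\<forall>\<^sub>F n in sequentially. hc_opt_risk P Q n (k n) < cr ^ (K^2)"
    using order_tendstoD(2)[OF assms(7) dpos] .
  have ev2: "\<forall>\<^sub>F n in sequentially. 2 \<le> n" by (rule eventually_ge_at_top)
  have "\<exists>\<^sub>F n in sequentially. k n < K \<and> hc_opt_risk P Q n (k n) < cr ^ (K^2) \<and> 2 \<le> n"
    using frequently_eventually_conj[OF freq eventually_conj[OF ev1 ev2]] by (rule frequently_elim1) auto
  then obtain n where n: "k n < K" "hc_opt_risk P Q n (k n) < cr ^ (K^2)" "2 \<le> n"
    using frequently_ex by blast
  have kn: "k n \<le> n" using assms(6)[OF n(3)] by simp
  have "cr ^ ((k n)^2) \<le> hc_opt_risk P Q n (k n)"
    unfolding cr_def c_def by (rule opt_bound[OF assms(1,2) sQ assms(5) kn])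
  moreover have "(k n)^2 \<le> K^2" using power_mono[of "k n" K 2] n(1) by linarith
  hence "cr ^ (K^2) \<le> cr ^ ((k n)^2)"
    using power_decreasing[of "(k n)^2" "K^2" cr] cr0 cr1 by linarith
  ultimately show False using n(2) by linarith
qed

end
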